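(* Let $Z=(z_{ij})$ be the generic $n\times n$ matrix of variables, and let $I,J\subseteq\{1,\ldots,n\}$ with $|I|=|J|$. Suppose every variable dividing the antidiagonal term of the minor $\Delta_{I,J}(Z)$ lies on or above the main antidiagonal of $Z$ (i.e. is some $z_{ij}$ with $i+j\le n+1$). Then among the monomials appearing in $\Delta_{I,J}(Z)$, the antidiagonal term is the unique one of lowest $\omega$-weight.
   Context: $\omega=(\omega_{ij})$ is the integer matrix with $\omega_{ij}=3^{\,n-i-j}$ if $i+j\le n$ and $\omega_{ij}=0$ if $i+j>n$. The $\omega$-weight of a monomial $\prod z_{ij}^{e_{ij}}$ in $\mathbb{C}[z_{ij}]$ is $\sum e_{ij}\omega_{ij}$. $\Delta_{I,J}(Z)$ denotes the minor of $Z$ with row set $I$ and column set $J$; its antidiagonal term is the product of the entries on the main antidiagonal of the corresponding square submatrix (taking rows and columns in increasing order), i.e. for $I=\{i_1<\cdots<i_k\}$, $J=\{j_1<\cdots<j_k\}$ it is $\prod_{r=1}^k z_{i_r,j_{k+1-r}}$. *)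

theory Defs
  imports Main "HOL-Library.Multiset" "HOL-Library.FuncSet"
begin

text \<open>Variables z_ij of the generic n x n matrix are indexed by pairs (i,j) with
  1 <= i,j <= n.  A monomial in the z_ij is a finite multiset of index pairs
  (the exponent of z_ij is the multiplicity of (i,j)).\<close>

type_synonym monomial = "(nat \<times> nat) multiset"

definition omega :: "nat \<Rightarrow> nat \<Rightarrow> nat \<Rightarrow> nat" where
  "omega n i j = (if i + j \<le> n then 3 ^ (n - i - j) else 0)"

definition omega_weight :: "nat \<Rightarrow> monomial \<Rightarrow> nat" where
  "omega_weight n m = (\<Sum>p\<in>#m. omega n (fst p) (snd p))"

text \<open>Bijections I -> J (extensional, so there are finitely many).\<close>
definition bijs :: "nat set \<Rightarrow> nat set \<Rightarrow> (nat \<Rightarrow> nat) set" where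
  "bijs I J = {\<sigma> \<in> I \<rightarrow>\<^sub>E J. bij_betw \<sigma> I J}"

definition bij_sign :: "nat set \<Rightarrow> (nat \<Rightarrow> nat) \<Rightarrow> int" where
  "bij_sign I \<sigma> = (-1) ^ card {(i, i'). i \<in> I \<and> i' \<in> I \<and> i < i' \<and> \<sigma> i' < \<sigma> i}"

definition bij_monomial :: "nat set \<Rightarrow> (nat \<Rightarrow> nat) \<Rightarrow> monomial" where
  "bij_monomial I \<sigma> = image_mset (\<lambda>i. (i, \<sigma> i)) (mset_set I)"

text \<open>Coefficient of the monomial m in the minor Delta_{I,J}(Z) (Leibniz expansion).\<close>
definition minor_coeff :: "nat set \<Rightarrow> nat set \<Rightarrow> monomial \<Rightarrow> int" where
  "minor_coeff I J m = (\<Sum>\<sigma>\<in>{\<sigma> \<in> bijs I J. bij_monomial I \<sigma> = m}. bij_sign I \<sigma>)"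

definition minor_monomials :: "nat set \<Rightarrow> nat set \<Rightarrow> monomial set" where
  "minor_monomials I J = {m. minor_coeff I J m \<noteq> 0}"

definition antidiag_term :: "nat set \<Rightarrow> nat set \<Rightarrow> monomial" where
  "antidiag_term I J = mset (zip (sorted_list_of_set I) (rev (sorted_list_of_set J)))"

end

theory Submission
  imports Defs "HOL-Combinatorics.Transposition"
begin

lemma sl_max: assumes "finite A" "A \<noteq> {}"
  shows "sorted_list_of_set A = sorted_list_of_set (A - {Max A}) @ [Max A]"
proof -
  have m: "Max A \<in> A" using assms by simp
  have "sorted_wrt (<) (sorted_list_of_set (A - {Max A}) @ [Max A])"
    using assms m by (auto simp: sorted_wrt_append intro!: le_neq_trans[OF Max_ge[OF assms(1)]])
  moreover have "set (sorted_list_of_set (A - {Max A}) @ [Max A]) = A"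
    using assms m by (simp; blast)
  moreover have "length (sorted_list_of_set (A - {Max A}) @ [Max A]) = card A"
    using assms m by (simp add: card_Diff_singleton) (metis Suc_pred card_gt_0_iff assms)
  ultimately show ?thesis using sorted_list_of_set_unique[OF assms(1)] by blast
qed

lemma antidiag_step:
  assumes "finite I" "finite J" "I \<noteq> {}" "J \<noteq> {}"
  shows "antidiag_term I J = add_mset (Min I, Max J) (antidiag_term (I - {Min I}) (J - {Max J}))"
  unfolding antidiag_term_def
  using sorted_list_of_set_nonempty[OF assms(1,3)] sl_max[OF assms(2,4)] by simp

definition W :: "nat \<Rightarrow> nat set \<Rightarrow> (nat \<Rightarrow> nat) \<Rightarrow> nat" where
  "W n I f = (\<Sum>i\<in>I. omega n i (f i))"

lemma weight_W: "finite I \<Longrightarrow> omega_weight n (bij_monomial I f) = W n I f"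
  unfolding omega_weight_def bij_monomial_def W_def
  by (simp add: multiset.map_comp o_def sum_unfold_sum_mset)

lemma omega_small: assumes "s < x + y" "s \<le> n" shows "3 * omega n x y \<le> 3 ^ (n - s)"
proof (cases "x + y \<le> n")
  case True
  have "3 * omega n x y = 3 ^ Suc (n - x - y)" using True by (simp add: omega_def)
  also have "\<dots> \<le> 3 ^ (n - s)" by (rule power_increasing) (use assms True in auto)
  finally show ?thesis .
qed (simp add: omega_def)

lemma swap_ineq:
  assumes "a < b" "c < d" "a + d \<le> n + 1"
  shows "omega n a d + omega n b c < omega n a c + omega n b d"
proof -
  have ac: "a + c \<le> n" using assms by auto
  have "3 * omega n a d \<le> 3 ^ (n - (a + c))" by (rule omega_small) (use assms ac in auto)
  moreover have "3 * omega n b c \<le> 3 ^ (n - (a + c))" by (rule omega_small) (use assms ac in auto)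
  moreover have "omega n a c = 3 ^ (n - (a + c))" using ac by (simp add: omega_def)
  moreover have "(0::nat) < 3 ^ (n - (a + c))" by simp
  ultimately show ?thesis by linarith
qed

lemma core:
  "finite I \<Longrightarrow> finite J \<Longrightarrow> card I = card J \<Longrightarrow>
   \<forall>(i, j) \<in> set_mset (antidiag_term I J). i + j \<le> n + 1 \<Longrightarrow>
   \<exists>\<tau>\<in>bijs I J. bij_monomial I \<tau> = antidiag_term I J \<and>
      (\<forall>\<sigma>\<in>bijs I J. \<sigma> \<noteq> \<tau> \<longrightarrow> W n I \<tau> < W n I \<sigma>)"
proof (induction "card I" arbitrary: I J)
  case 0
  then have IJ: "I = {}" "J = {}" by auto
  have b: "bijs I J = {\<lambda>_. undefined}" using IJ by (auto simp: bijs_def bij_betw_def)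
  show ?case using IJ b by (auto simp: bij_monomial_def antidiag_term_def)
next
  case (Suc k I J)
  have In: "I \<noteq> {}" "J \<noteq> {}" using Suc.hyps(2) Suc.prems(3) by auto
  define a where "a = Min I"
  define d where "d = Max J"
  define I' where "I' = I - {a}"
  define J' where "J' = J - {d}"
  have aI: "a \<in> I" using a_def In Suc.prems by simp
  have dJ: "d \<in> J" using d_def In Suc.prems by simp
  have amin: "\<And>x. x \<in> I \<Longrightarrow> a \<le> x" using a_def Suc.prems by simp
  have dmax: "\<And>x. x \<in> J \<Longrightarrow> x \<le> d" using d_def Suc.prems by simp
  have A: "antidiag_term I J = add_mset (a, d) (antidiag_term I' J')"
    using antidiag_step[OF Suc.prems(1,2) In] a_def d_def I'_def J'_def by simp
  have ad: "a + d \<le> n + 1" using Suc.prems(4) A by auto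
  have fI': "finite I'" "finite J'" using Suc.prems I'_def J'_def by auto
  have cI': "k = card I'" "card I' = card J'"
    using Suc.hyps(2) Suc.prems(3) aI dJ I'_def J'_def Suc.prems(1,2) by auto
  have h': "\<forall>(i, j) \<in> set_mset (antidiag_term I' J'). i + j \<le> n + 1"
    using Suc.prems(4) A by auto
  obtain \<tau>' where t'B: "\<tau>' \<in> bijs I' J'" and t'm: "bij_monomial I' \<tau>' = antidiag_term I' J'"
    and t'min: "\<forall>\<sigma>\<in>bijs I' J'. \<sigma> \<noteq> \<tau>' \<longrightarrow> W n I' \<tau>' < W n I' \<sigma>"
    using Suc.hyps(1)[OF cI'(1) fI' cI'(2) h'] by blast
  define \<tau> where "\<tau> = \<tau>'(a := d)"
  have Ieq: "I = insert a I'" "a \<notin> I'" using aI I'_def by auto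
  have Jeq: "J = insert d J'" "d \<notin> J'" using dJ J'_def by auto
  have t'PiE: "\<tau>' \<in> I' \<rightarrow>\<^sub>E J'" and t'bij: "bij_betw \<tau>' I' J'" using t'B by (auto simp: bijs_def)
  have teq: "\<And>x. x \<in> I' \<Longrightarrow> \<tau> x = \<tau>' x" using Ieq \<tau>_def by auto
  have tbij': "bij_betw \<tau> I' J'" using t'bij teq bij_betw_cong by blast
  have tB: "\<tau> \<in> bijs I J"
  proof -
    have "\<tau> \<in> I \<rightarrow>\<^sub>E J" using t'PiE Ieq Jeq unfolding \<tau>_def by (auto simp: PiE_def extensional_def)
    moreover have "bij_betw \<tau> I J"
      using tbij' Ieq Jeq unfolding bij_betw_def by (auto simp: \<tau>_def)
    ultimately show ?thesis by (simp add: bijs_def)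
  qed
  have mon: "\<And>f. bij_monomial I f = add_mset (a, f a) (bij_monomial I' f)"
    using Ieq fI' by (simp add: bij_monomial_def)
  have tm: "bij_monomial I \<tau> = antidiag_term I J"
  proof -
    have "bij_monomial I' \<tau> = bij_monomial I' \<tau>'"
      unfolding bij_monomial_def using teq fI' by (auto intro!: image_mset_cong)
    then show ?thesis using mon[of \<tau>] t'm A by (simp add: \<tau>_def)
  qed
  have Wsplit: "\<And>f. W n I f = omega n a (f a) + W n I' f"
    using Ieq fI' by (simp add: W_def)
  have claim1: "\<And>\<rho>. \<rho> \<in> bijs I J \<Longrightarrow> \<rho> a = d \<Longrightarrow> W n I \<tau> \<le> W n I \<rho> \<and> (\<rho> \<noteq> \<tau> \<longrightarrow> W n I \<tau> < W n I \<rho>)"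
  proof -
    fix \<rho> assume rB: "\<rho> \<in> bijs I J" and ra: "\<rho> a = d"
    have rPiE: "\<rho> \<in> I \<rightarrow>\<^sub>E J" and rbij: "bij_betw \<rho> I J" using rB by (auto simp: bijs_def)
    define \<rho>' where "\<rho>' = restrict \<rho> I'"
    have rbij': "bij_betw \<rho> I' J'"
      unfolding I'_def J'_def by (rule bij_betw_DiffI[OF rbij]) (use ra aI dJ in \<open>auto simp: bij_betw_def\<close>)
    have r'B: "\<rho>' \<in> bijs I' J'"
    proof -
      have "\<rho>' \<in> I' \<rightarrow>\<^sub>E J'" using rbij' unfolding \<rho>'_def bij_betw_def by auto
      moreover have "bij_betw \<rho>' I' J' = bij_betw \<rho> I' J'"
        by (rule bij_betw_cong) (simp add: \<rho>'_def)
      then have "bij_betw \<rho>' I' J'" using rbij' by blast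
      ultimately show ?thesis by (simp add: bijs_def)
    qed
    have W1: "W n I' \<rho>' = W n I' \<rho>" unfolding W_def \<rho>'_def by simp
    have W2: "W n I' \<tau>' = W n I' \<tau>" unfolding W_def using teq by simp
    show "W n I \<tau> \<le> W n I \<rho> \<and> (\<rho> \<noteq> \<tau> \<longrightarrow> W n I \<tau> < W n I \<rho>)"
    proof (cases "\<rho>' = \<tau>'")
      case True
      have "\<rho> = \<tau>"
      proof
        fix x show "\<rho> x = \<tau> x"
        proof (cases "x \<in> I")
          case True
          then show ?thesis using ra Ieq teq \<open>\<rho>' = \<tau>'\<close> unfolding \<rho>'_def \<tau>_def
            by (cases "x = a") (auto dest: fun_cong[where x=x])
        next
          case False
          then show ?thesis using rPiE t'PiE Ieq unfolding \<tau>_def by (auto simp: PiE_def extensional_def)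
        qed
      qed
      then show ?thesis by simp
    next
      case False
      then have "W n I' \<tau>' < W n I' \<rho>'" using t'min r'B by blast
      then show ?thesis using Wsplit[of \<rho>] Wsplit[of \<tau>] W1 W2 ra by (simp add: \<tau>_def)
    qed
  qed
  have "\<forall>\<sigma>\<in>bijs I J. \<sigma> \<noteq> \<tau> \<longrightarrow> W n I \<tau> < W n I \<sigma>"
  proof (intro ballI impI)
    fix \<sigma> assume sB: "\<sigma> \<in> bijs I J" and sne: "\<sigma> \<noteq> \<tau>"
    have sPiE: "\<sigma> \<in> I \<rightarrow>\<^sub>E J" and sbij: "bij_betw \<sigma> I J" using sB by (auto simp: bijs_def)
    show "W n I \<tau> < W n I \<sigma>"
    proof (cases "\<sigma> a = d")
      case True
      then show ?thesis using claim1 sB sne by blast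
    next
      case False
      obtain b where bI: "b \<in> I" and sb: "\<sigma> b = d" using sbij dJ unfolding bij_betw_def by blast
      have ba: "b \<noteq> a" using False sb by auto
      have ab: "a < b" using amin[OF bI] ba by simp
      define c where "c = \<sigma> a"
      have cJ: "c \<in> J" using sbij aI c_def unfolding bij_betw_def by auto
      have cd: "c < d" using dmax[OF cJ] False c_def by simp
      define \<sigma>2 where "\<sigma>2 = \<sigma>(a := d, b := c)"
      have s2: "\<sigma>2 = \<sigma> \<circ> Transposition.transpose a b"
        unfolding \<sigma>2_def c_def using sb ba by (auto simp: fun_eq_iff Transposition.transpose_def)
      have s2B: "\<sigma>2 \<in> bijs I J"
      proof -
        have "bij_betw (Transposition.transpose a b) I I" using aI bI by simp
        then have "bij_betw \<sigma>2 I J" using sbij s2 bij_betw_trans by blast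
        moreover have "\<sigma>2 \<in> I \<rightarrow>\<^sub>E J" using sPiE aI bI dJ cJ unfolding \<sigma>2_def
          by (auto simp: PiE_def extensional_def)
        ultimately show ?thesis by (simp add: bijs_def)
      qed
      have "W n I \<tau> \<le> W n I \<sigma>2" using claim1[OF s2B] ba by (simp add: \<sigma>2_def)
      also have "W n I \<sigma>2 < W n I \<sigma>"
      proof -
        have fin: "finite (I - {a, b})" using Suc.prems(1) by simp
        have split: "\<And>f. W n I f = omega n a (f a) + omega n b (f b) + W n (I - {a, b}) f"
        proof -
          fix f
          have "I = insert a (insert b (I - {a, b}))" using aI bI by auto
          then show "W n I f = omega n a (f a) + omega n b (f b) + W n (I - {a, b}) f"
            unfolding W_def using fin ba by (metis (no_types, lifting) Diff_iff add.assoc insert_iff sum.insert finite_insert)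
        qed
        have rest: "W n (I - {a, b}) \<sigma>2 = W n (I - {a, b}) \<sigma>"
          unfolding W_def \<sigma>2_def by (intro sum.cong) auto
        have "omega n a d + omega n b c < omega n a c + omega n b d"
          by (rule swap_ineq[OF ab cd ad])
        then show ?thesis using split[of \<sigma>2] split[of \<sigma>] rest ba sb
          by (simp add: \<sigma>2_def c_def)
      qed
      finally show ?thesis .
    qed
  qed
  then show ?case using tB tm by blast
qed

lemma bij_monomial_inj:
  assumes "finite I" "\<sigma> \<in> bijs I J" "\<sigma>' \<in> bijs I J" "bij_monomial I \<sigma> = bij_monomial I \<sigma>'"
  shows "\<sigma> = \<sigma>'"
proof (rule ext)
  fix x
  show "\<sigma> x = \<sigma>' x"
  proof (cases "x \<in> I")
    case True
    have xI: "x \<in># mset_set I" using True assms(1) by simp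
    have "(x, \<sigma> x) \<in># bij_monomial I \<sigma>"
      unfolding bij_monomial_def in_image_mset using xI by blast
    then have "(x, \<sigma> x) \<in># image_mset (\<lambda>i. (i, \<sigma>' i)) (mset_set I)"
      using assms(4) unfolding bij_monomial_def by simp
    then obtain y where "(x, \<sigma> x) = (y, \<sigma>' y)" unfolding in_image_mset by blast
    then show ?thesis by (metis prod.inject)
  next
    case False
    have "\<sigma> \<in> I \<rightarrow>\<^sub>E J" "\<sigma>' \<in> I \<rightarrow>\<^sub>E J" using assms(2,3) unfolding bijs_def by simp_all
    then show ?thesis using False PiE_arb by metis
  qed
qed

theorem mainTheorem2:
  fixes n :: nat and I J :: "nat set"
  assumes "I \<subseteq> {1..n}" and "J \<subseteq> {1..n}" and "card I = card J"
    and "\<forall>(i, j) \<in> set_mset (antidiag_term I J). i + j \<le> n + 1"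
  shows "antidiag_term I J \<in> minor_monomials I J \<and>
         (\<forall>m \<in> minor_monomials I J. m \<noteq> antidiag_term I J \<longrightarrow>
            omega_weight n (antidiag_term I J) < omega_weight n m)"
proof -
  have fI: "finite I" "finite J" using assms(1,2) finite_subset by auto
  obtain \<tau> where tB: "\<tau> \<in> bijs I J" and tm: "bij_monomial I \<tau> = antidiag_term I J"
    and tmin: "\<forall>\<sigma>\<in>bijs I J. \<sigma> \<noteq> \<tau> \<longrightarrow> W n I \<tau> < W n I \<sigma>"
    using core[OF fI assms(3,4)] by blast
  have S: "{\<sigma> \<in> bijs I J. bij_monomial I \<sigma> = antidiag_term I J} = {\<tau>}"
  proof
    show "{\<sigma> \<in> bijs I J. bij_monomial I \<sigma> = antidiag_term I J} \<subseteq> {\<tau>}"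
    proof (rule subsetI)
      fix \<sigma> assume "\<sigma> \<in> {\<sigma> \<in> bijs I J. bij_monomial I \<sigma> = antidiag_term I J}"
      then have "\<sigma> \<in> bijs I J" "bij_monomial I \<sigma> = bij_monomial I \<tau>" using tm by simp_all
      then show "\<sigma> \<in> {\<tau>}" using bij_monomial_inj[OF fI(1) _ tB] by blast
    qed
    show "{\<tau>} \<subseteq> {\<sigma> \<in> bijs I J. bij_monomial I \<sigma> = antidiag_term I J}"
      using tB tm by blast
  qed
  have "minor_coeff I J (antidiag_term I J) = bij_sign I \<tau>"
    unfolding minor_coeff_def S by simp
  moreover have "bij_sign I \<tau> \<noteq> 0"
  proof -
    have "((-1)::int) ^ k \<noteq> 0" for k by simp
    then show ?thesis unfolding bij_sign_def by blast
  qed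
  ultimately have "antidiag_term I J \<in> minor_monomials I J"
    unfolding minor_monomials_def by simp
  moreover have "\<forall>m \<in> minor_monomials I J. m \<noteq> antidiag_term I J \<longrightarrow>
            omega_weight n (antidiag_term I J) < omega_weight n m"
  proof (intro ballI impI)
    fix m assume m: "m \<in> minor_monomials I J" and mne: "m \<noteq> antidiag_term I J"
    have "{\<sigma> \<in> bijs I J. bij_monomial I \<sigma> = m} \<noteq> {}"
    proof
      assume e: "{\<sigma> \<in> bijs I J. bij_monomial I \<sigma> = m} = {}"
      have "minor_coeff I J m = 0" unfolding minor_coeff_def e by (rule sum.empty)
      then show False using m by (simp add: minor_monomials_def)
    qed
    then obtain \<sigma> where sB: "\<sigma> \<in> bijs I J" and sm: "bij_monomial I \<sigma> = m" by blast
    have "\<sigma> \<noteq> \<tau>" using sm tm mne by metis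
    then have "W n I \<tau> < W n I \<sigma>" using tmin sB by blast
    then show "omega_weight n (antidiag_term I J) < omega_weight n m"
      using weight_W[OF fI(1), of n \<tau>] weight_W[OF fI(1), of n \<sigma>] unfolding tm sm by simp
  qed
  ultimately show ?thesis by blast
qed

end
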